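(* Assume the standing setup below. Then for all $r>0$ and all $t\ge2$, $$\log g(r^t)\ge t\log g(r).$$
   Context: Standing setup: $(\delta_n)_{n\in\mathbb N}$ is a sequence with $0<\delta_n<1/2$; $(a_n)_{n\in\mathbb N}$ is a positive strictly increasing sequence; $p_n=\lfloor a_n^{\delta_n/4}/4\rfloor$; and for all $n\in\mathbb N$: (C1) $a_1^{\delta_1/4}\ge4$, $a_{n+1}>a_n^2$, and $a_{n+1}^{\delta_{n+1}/2}>16a_n^{\delta_n}$; (C2) $a_{n+1}^{\delta_{n+1}/16}>a_n^{\delta_n}\log a_{n+1}$. The function $g:[0,\infty)\to[0,\infty)$ is defined by $g(r)=r^3$ for $0\le r<a_1$ and $g(r)=r^3\prod_{n:\,a_n\le r}(1+r/a_n)^{2p_n}$ for $r\ge a_1$. *)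

theory Defs
  imports "HOL-Analysis.Analysis"
begin

text \<open>Sequences are indexed by nat starting at 0, so a 0 plays the role of a_1.\<close>

definition pn :: "(nat \<Rightarrow> real) \<Rightarrow> (nat \<Rightarrow> real) \<Rightarrow> nat \<Rightarrow> nat" where
  "pn a \<delta> n = nat \<lfloor>a n powr (\<delta> n / 4) / 4\<rfloor>"

definition gfun :: "(nat \<Rightarrow> real) \<Rightarrow> (nat \<Rightarrow> real) \<Rightarrow> real \<Rightarrow> real" where
  "gfun a \<delta> r = (if r < a 0 then r ^ 3
     else r ^ 3 * (\<Prod>n\<in>{n. a n \<le> r}. (1 + r / a n) ^ (2 * pn a \<delta> n)))"

end

theory Submission
  imports Defs
begin

lemma key_ineq:
  fixes x A t :: real
  assumes A4: "4 \<le> A" and xA: "A \<le> x" and t2: "2 \<le> t"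
  shows "(1 + x / A) powr t \<le> 1 + x powr t / A"
proof -
  have Apos: "0 < A" using A4 by simp
  have "1 + x / A \<le> 2 * x / A" using xA Apos by (simp add: field_simps)
  hence "(1 + x / A) powr t \<le> (2 * x / A) powr t"
    by (intro powr_mono2) (use t2 Apos xA in auto)
  also have "\<dots> = 2 powr t * x powr t / A powr t"
    by (simp add: powr_mult powr_divide)
  also have "\<dots> \<le> x powr t / A"
  proof -
    have "2 powr t \<le> 4 powr (t - 1)"
    proof -
      have f: "(4::real) = 2 powr 2" by simp
      have "4 powr (t - 1) = 2 powr (2 * (t - 1))"
        by (subst f) (rule powr_powr)
      also have "2 powr t \<le> \<dots>" by (rule powr_mono) (use t2 in auto)
      finally show ?thesis .
    qed
    also have "\<dots> \<le> A powr (t - 1)" by (rule powr_mono2) (use t2 A4 in auto)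
    also have "\<dots> = A powr t / A" using Apos by (simp add: powr_diff)
    finally have h: "2 powr t \<le> A powr t / A" .
    have "2 powr t * x powr t \<le> (A powr t / A) * x powr t"
      by (rule mult_right_mono[OF h]) simp
    thus ?thesis using Apos by (simp add: field_simps)
  qed
  also have "\<dots> \<le> 1 + x powr t / A" by simp
  finally show ?thesis .
qed

theorem lemma3p5:
  fixes a \<delta> :: "nat \<Rightarrow> real"
  assumes delta_pos: "\<And>n. 0 < \<delta> n" and delta_lt: "\<And>n. \<delta> n < 1/2"
    and a_pos: "\<And>n. 0 < a n" and a_mono: "strict_mono a"
    and C1a: "a 0 powr (\<delta> 0 / 4) \<ge> 4"
    and C1b: "\<And>n. a (Suc n) > (a n)\<^sup>2"
    and C1c: "\<And>n. a (Suc n) powr (\<delta> (Suc n) / 2) > 16 * a n powr \<delta> n"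
    and C2: "\<And>n. a (Suc n) powr (\<delta> (Suc n) / 16) > a n powr \<delta> n * ln (a (Suc n))"
    and r_pos: "0 < r" and t_ge: "2 \<le> t"
  shows "ln (gfun a \<delta> (r powr t)) \<ge> t * ln (gfun a \<delta> r)"
proof -
  have a0_1: "1 < a 0"
  proof (rule ccontr)
    assume "\<not> 1 < a 0"
    hence "a 0 powr (\<delta> 0 / 4) \<le> 1 powr (\<delta> 0 / 4)"
      using a_pos[of 0] delta_pos[of 0] by (intro powr_mono2) auto
    thus False using C1a by simp
  qed
  have a0_4: "4 \<le> a 0"
  proof -
    have "a 0 powr (\<delta> 0 / 4) \<le> a 0 powr 1"
      by (rule powr_mono) (use delta_lt[of 0] a0_1 in auto)
    thus ?thesis using C1a a_pos[of 0] by simp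
  qed
  have a_ge: "a 0 \<le> a n" for n
    using a_mono by (metis le0 strict_mono_leD)
  have a4: "4 \<le> a n" for n using a_ge[of n] a0_4 by simp
  have a_pow: "a 0 ^ Suc n \<le> a n" for n
  proof (induction n)
    case 0 thus ?case by simp
  next
    case (Suc n)
    have "a 0 ^ Suc (Suc n) = a 0 * a 0 ^ Suc n" by simp
    also have "\<dots> \<le> a n * a n"
      by (rule mult_mono) (use Suc a_ge[of n] a0_1 in auto)
    also have "\<dots> < a (Suc n)" using C1b[of n] by (simp add: power2_eq_square)
    finally show ?case by simp
  qed
  have fin: "finite {n. a n \<le> s}" for s
  proof -
    obtain N where N: "s < a 0 ^ N" using real_arch_pow[OF a0_1] by blast
    have "{n. a n \<le> s} \<subseteq> {..<N}"
    proof
      fix n assume "n \<in> {n. a n \<le> s}"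
      hence h: "a n \<le> s" by simp
      show "n \<in> {..<N}"
      proof (rule ccontr)
        assume "n \<notin> {..<N}"
        hence "N \<le> Suc n" by simp
        hence "a 0 ^ N \<le> a 0 ^ Suc n" using a0_1 by (intro power_increasing) auto
        thus False using a_pow[of n] h N by simp
      qed
    qed
    thus ?thesis using finite_subset by blast
  qed
  define P where "P s = (\<Prod>n\<in>{n. a n \<le> s}. (1 + s / a n) ^ (2 * pn a \<delta> n))" for s
  have P1: "1 \<le> P s" if "0 < s" for s
    unfolding P_def using that a_pos
    by (intro prod_ge_1) (auto intro!: one_le_power simp: less_imp_le)
  have g_ge: "s ^ 3 \<le> gfun a \<delta> s" if "0 < s" for s
  proof -
    have "s ^ 3 * 1 \<le> s ^ 3 * P s" using P1[OF that] that by (intro mult_left_mono) auto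
    thus ?thesis unfolding gfun_def P_def by auto
  qed
  have gpos: "0 < gfun a \<delta> s" if "0 < s" for s
    using g_ge[OF that] that by (smt (verit) zero_less_power)
  have main: "gfun a \<delta> r powr t \<le> gfun a \<delta> (r powr t)"
  proof -
  have r3: "(r ^ 3) powr t = (r powr t) ^ 3"
  proof -
    have "r ^ 3 = r powr (real 3)" using r_pos by (rule powr_realpow[symmetric])
    hence "(r ^ 3) powr t = r powr (real 3 * t)" by (simp only: powr_powr)
    also have "\<dots> = (r powr t) ^ 3"
      using r_pos by (intro powr_power[symmetric]) simp
    finally show ?thesis .
  qed
  show ?thesis
  proof (cases "r \<le> 1")
    case True
    have "r powr t \<le> 1 powr t" using True r_pos t_ge by (intro powr_mono2) auto
    hence "r powr t < a 0" "r < a 0" using a0_1 True by auto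
    hence "gfun a \<delta> r = r ^ 3" "gfun a \<delta> (r powr t) = (r powr t) ^ 3"
      by (simp_all add: gfun_def)
    thus ?thesis using r3 by simp
  next
    case False
    hence r1: "1 < r" by simp
    have rt: "r \<le> r powr t"
    proof -
      have "r powr 1 \<le> r powr t" by (rule powr_mono) (use t_ge r1 in auto)
      thus ?thesis using r_pos by simp
    qed
    show ?thesis
    proof (cases "r < a 0")
      case True
      hence "gfun a \<delta> r = r ^ 3" by (simp add: gfun_def)
      thus ?thesis using r3 g_ge[of "r powr t"] r_pos by simp
    next
      case False
      hence "gfun a \<delta> r = r ^ 3 * P r" by (simp add: gfun_def P_def)
      moreover have "gfun a \<delta> (r powr t) = (r powr t) ^ 3 * P (r powr t)"
        using False rt by (simp add: gfun_def P_def)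
      moreover have "P r powr t \<le> P (r powr t)"
      proof -
        have "P r powr t = (\<Prod>n\<in>{n. a n \<le> r}. ((1 + r / a n) powr t) ^ (2 * pn a \<delta> n))"
          unfolding P_def prod_powr_distrib
        proof (rule prod.cong[OF refl])
          fix n
          have pp: "0 < 1 + r / a n" using a_pos[of n] r_pos by (simp add: add_pos_pos)
          show "((1 + r / a n) ^ (2 * pn a \<delta> n)) powr t = ((1 + r / a n) powr t) ^ (2 * pn a \<delta> n)"
          proof -
            have "(1 + r / a n) ^ (2 * pn a \<delta> n) = (1 + r / a n) powr (real (2 * pn a \<delta> n))"
              using pp by (rule powr_realpow[symmetric])
            hence "((1 + r / a n) ^ (2 * pn a \<delta> n)) powr t = (1 + r / a n) powr (real (2 * pn a \<delta> n) * t)"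
              by (simp only: powr_powr)
            also have "\<dots> = ((1 + r / a n) powr t) ^ (2 * pn a \<delta> n)"
            proof -
              have ne: "1 + r / a n \<noteq> 0" using pp by simp
              show ?thesis by (rule powr_power[OF ne, symmetric])
            qed
            finally show ?thesis .
          qed
        qed
        also have "\<dots> \<le> (\<Prod>n\<in>{n. a n \<le> r}. (1 + r powr t / a n) ^ (2 * pn a \<delta> n))"
          by (intro prod_mono conjI power_mono key_ineq a4 t_ge) auto
        also have "\<dots> \<le> P (r powr t)"
          unfolding P_def
          by (rule prod_mono2) (use fin rt a_pos r_pos in \<open>auto intro!: one_le_power simp: less_imp_le\<close>)
        finally show ?thesis .
      qed
      ultimately show ?thesis
      proof -
        assume e1: "gfun a \<delta> r = r ^ 3 * P r"
          and e2: "gfun a \<delta> (r powr t) = (r powr t) ^ 3 * P (r powr t)"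
          and le: "P r powr t \<le> P (r powr t)"
        have "gfun a \<delta> r powr t = (r ^ 3) powr t * P r powr t"
          by (simp only: e1 powr_mult)
        also have "\<dots> = (r powr t) ^ 3 * P r powr t" by (simp only: r3)
        also have "\<dots> \<le> (r powr t) ^ 3 * P (r powr t)"
          by (rule mult_left_mono[OF le]) simp
        also have "\<dots> = gfun a \<delta> (r powr t)" by (simp only: e2)
        finally show ?thesis .
      qed
    qed
  qed
  qed
  have "t * ln (gfun a \<delta> r) = ln (gfun a \<delta> r powr t)"
    using gpos[OF r_pos] by simp
  also have "\<dots> \<le> ln (gfun a \<delta> (r powr t))"
    using main gpos[OF r_pos] gpos[of "r powr t"] r_pos by (subst ln_le_cancel_iff) auto
  finally show ?thesis .
qed

end
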